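(* Let $p\in(0,1)$ be constant, $b=1/(1-p)$, and let $a=a(n)$ be an integer satisfying $1.01\log_b n\le a\le 100\log_b n$ and $\mu\le n^{1.99}$, where $\mu=\mu_a(n)=\binom{n}{a}(1-p)^{\binom a2}$. Then there is a coupling of $G_n=G_{n,p}$ and $G_{n-a}=G_{n-a,p}$ such that \[ \Pr\big(\chi(G_n)\le\chi(G_{n-a})+1\big)\ge 1-\frac{1+o(1)}{2\sqrt{\mu}}, \] where $o(1)$ denotes a quantity tending to $0$ as $n\to\infty$.
   Context: $G_{n,p}$ is the binomial random graph on $n$ labelled vertices with edge probability $p$; $\chi$ denotes chromatic number. A coupling is a joint probability space carrying both random graphs with their correct marginal distributions. *)

theory Defs
  imports "HOL-Probability.Probability"
begin

text \<open>Graphs on the labelled vertex set {0..<n} are represented by their edge sets: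
  sets of two-element subsets {i,j} of {0..<n}.\<close>

definition all_pairs :: "nat \<Rightarrow> nat set set" where
  "all_pairs n = {{i, j} | i j. i < j \<and> j < n}"

definition gnp :: "nat \<Rightarrow> real \<Rightarrow> nat set set pmf" where
  "gnp n p = map_pmf (\<lambda>f. {e \<in> all_pairs n. f e})
              (Pi_pmf (all_pairs n) False (\<lambda>_. bernoulli_pmf p))"

definition proper_colouring :: "nat \<Rightarrow> nat set set \<Rightarrow> nat \<Rightarrow> (nat \<Rightarrow> nat) \<Rightarrow> bool" where
  "proper_colouring n E k c \<longleftrightarrow>
     (\<forall>v<n. c v < k) \<and> (\<forall>u v. {u, v} \<in> E \<and> u \<noteq> v \<longrightarrow> c u \<noteq> c v)"

definition chromatic_number :: "nat \<Rightarrow> nat set set \<Rightarrow> nat" where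
  "chromatic_number n E = (LEAST k. \<exists>c. proper_colouring n E k c)"

definition is_coupling :: "('a \<times> 'b) pmf \<Rightarrow> 'a pmf \<Rightarrow> 'b pmf \<Rightarrow> bool" where
  "is_coupling q P Q \<longleftrightarrow> map_pmf fst q = P \<and> map_pmf snd q = Q"

end

theory Submission
  imports Defs
begin


lemma measure_pmf_cong_supp:
  assumes "A \<inter> set_pmf M = B \<inter> set_pmf M"
  shows "measure_pmf.prob M A = measure_pmf.prob M B"
  by (metis assms measure_Int_set_pmf)

lemma pmf_map_fst_sum:
  assumes "finite Y" "set_pmf q \<subseteq> UNIV \<times> Y"
  shows "pmf (map_pmf fst q) x = (\<Sum>y\<in>Y. pmf q (x,y))"
proof -
  have "pmf (map_pmf fst q) x = measure_pmf.prob q (fst -` {x})" by (simp add: pmf_map)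
  also have "\<dots> = measure_pmf.prob q ({x} \<times> Y)"
    by (rule measure_pmf_cong_supp) (use assms(2) in auto)
  also have "\<dots> = sum (pmf q) ({x} \<times> Y)"
    using assms(1) by (simp add: measure_measure_pmf_finite)
  also have "\<dots> = (\<Sum>y\<in>Y. pmf q (x,y))"
    by (simp add: sum.cartesian_product')
  finally show ?thesis .
qed

lemma pmf_map_snd_sum:
  assumes "finite X" "set_pmf q \<subseteq> X \<times> UNIV"
  shows "pmf (map_pmf snd q) y = (\<Sum>x\<in>X. pmf q (x,y))"
proof -
  have "pmf (map_pmf snd q) y = measure_pmf.prob q (snd -` {y})" by (simp add: pmf_map)
  also have "\<dots> = measure_pmf.prob q (X \<times> {y})"
    by (rule measure_pmf_cong_supp) (use assms(2) in auto)
  also have "\<dots> = sum (pmf q) (X \<times> {y})"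
    using assms(1) by (simp add: measure_measure_pmf_finite)
  also have "\<dots> = (\<Sum>x\<in>X. pmf q (x,y))"
    by (simp add: sum.cartesian_product')
  finally show ?thesis .
qed

lemma glue:
  fixes P P' :: "'a pmf" and Q :: "'b pmf" and q' :: "('a\<times>'b) pmf"
  assumes cpl: "is_coupling q' P' Q"
    and X: "finite X" "set_pmf P \<subseteq> X" "set_pmf P' \<subseteq> X"
    and Y: "finite Y" "set_pmf Q \<subseteq> Y"
    and E: "set_pmf q' \<subseteq> E"
  shows "\<exists>q. is_coupling q P Q \<and> measure_pmf.prob q E \<ge> (\<Sum>x\<in>X. min (pmf P x) (pmf P' x))"
proof -
  have m1: "map_pmf fst q' = P'" and m2: "map_pmf snd q' = Q"
    using cpl by (auto simp: is_coupling_def)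
  have sq': "set_pmf q' \<subseteq> X \<times> Y"
  proof
    fix z assume z: "z \<in> set_pmf q'"
    have "fst z \<in> set_pmf P'" using z m1 by (metis image_eqI set_map_pmf)
    moreover have "snd z \<in> set_pmf Q" using z m2 by (metis image_eqI set_map_pmf)
    ultimately show "z \<in> X \<times> Y" using X Y by (cases z) auto
  qed
  have hP': "pmf P' x = (\<Sum>y\<in>Y. pmf q' (x,y))" for x
    using pmf_map_fst_sum[OF Y(1), of q' x] sq' m1 by auto
  have hQ: "pmf Q y = (\<Sum>x\<in>X. pmf q' (x,y))" for y
    using pmf_map_snd_sum[OF X(1), of q' y] sq' m2 by auto
  have sP: "(\<Sum>x\<in>X. pmf P x) = 1" using X by (intro sum_pmf_eq_1) auto
  have sQ: "(\<Sum>y\<in>Y. pmf Q y) = 1" using Y by (intro sum_pmf_eq_1) auto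
  define c where "c x = min (pmf P x) (pmf P' x)" for x
  define g where "g z = (if pmf P' (fst z) = 0 then 0 else pmf q' z * c (fst z) / pmf P' (fst z))" for z
  define g2 where "g2 y = (\<Sum>x\<in>X. g (x,y))" for y
  define \<delta> where "\<delta> = 1 - (\<Sum>x\<in>X. c x)"
  define rP where "rP x = pmf P x - c x" for x
  define rQ where "rQ y = pmf Q y - g2 y" for y
  define f where "f z = (if z \<in> X \<times> Y then g z + rP (fst z) * rQ (snd z) / \<delta> else 0)" for z
  have c0: "0 \<le> c x" "c x \<le> pmf P x" "c x \<le> pmf P' x" for x by (auto simp: c_def)
  have g0: "0 \<le> g z" for z using c0 by (auto simp: g_def)
  have gle: "g z \<le> pmf q' z" for z
  proof (cases "pmf P' (fst z) = 0")
    case False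
    then have "pmf P' (fst z) > 0" using pmf_nonneg[of P' "fst z"] by linarith
    then have "c (fst z) / pmf P' (fst z) \<le> 1" using c0 by simp
    then have "pmf q' z * (c (fst z) / pmf P' (fst z)) \<le> pmf q' z * 1"
      by (intro mult_left_mono) auto
    then show ?thesis using False by (simp add: g_def)
  qed (simp add: g_def)
  have gsum: "(\<Sum>y\<in>Y. g (x,y)) = c x" for x
  proof (cases "pmf P' x = 0")
    case True
    then show ?thesis using c0[of x] by (simp add: g_def)
  next
    case False
    have "(\<Sum>y\<in>Y. g (x,y)) = (\<Sum>y\<in>Y. pmf q' (x,y)) * c x / pmf P' x"
      using False by (simp add: g_def sum_divide_distrib sum_distrib_right)
    also have "\<dots> = c x" using False by (simp add: hP'[symmetric])
    finally show ?thesis .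
  qed
  have g2le: "g2 y \<le> pmf Q y" for y
    unfolding g2_def hQ by (intro sum_mono gle)
  have g20: "0 \<le> g2 y" for y unfolding g2_def by (intro sum_nonneg g0)
  have sg2: "(\<Sum>y\<in>Y. g2 y) = (\<Sum>x\<in>X. c x)"
    unfolding g2_def by (subst sum.swap) (simp add: gsum)
  have rP0: "0 \<le> rP x" for x using c0 by (simp add: rP_def)
  have rQ0: "0 \<le> rQ y" for y using g2le by (simp add: rQ_def)
  have srP: "(\<Sum>x\<in>X. rP x) = \<delta>" by (simp add: rP_def \<delta>_def sum_subtractf sP)
  have srQ: "(\<Sum>y\<in>Y. rQ y) = \<delta>" by (simp add: rQ_def \<delta>_def sum_subtractf sQ sg2)
  have \<delta>0: "0 \<le> \<delta>" using srP rP0 by (metis sum_nonneg)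
  have f0: "0 \<le> f z" for z using g0 rP0 rQ0 \<delta>0 by (auto simp: f_def)
  have fout: "f z = 0" if "z \<notin> X \<times> Y" for z using that by (simp add: f_def)
  have fm1: "(\<Sum>y\<in>Y. f (x,y)) = pmf P x" if "x \<in> X" for x
  proof -
    have "(\<Sum>y\<in>Y. f (x,y)) = (\<Sum>y\<in>Y. g (x,y)) + rP x * (\<Sum>y\<in>Y. rQ y) / \<delta>"
      using that by (simp add: f_def sum.distrib sum_divide_distrib sum_distrib_left)
    also have "\<dots> = c x + rP x" 
    proof (cases "\<delta> = 0")
      case True
      then have "rP x = 0" using srP rP0 that X(1) by (metis sum_nonneg_eq_0_iff)
      then show ?thesis using gsum by simp
    qed (simp add: gsum srQ)
    finally show ?thesis by (simp add: rP_def)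
  qed
  have fm2: "(\<Sum>x\<in>X. f (x,y)) = pmf Q y" if "y \<in> Y" for y
  proof -
    have "(\<Sum>x\<in>X. f (x,y)) = g2 y + (\<Sum>x\<in>X. rP x) * rQ y / \<delta>"
      using that by (simp add: f_def sum.distrib sum_divide_distrib sum_distrib_right g2_def)
    also have "\<dots> = g2 y + rQ y" 
    proof (cases "\<delta> = 0")
      case True
      then have "rQ y = 0" using srQ rQ0 that Y(1) by (metis sum_nonneg_eq_0_iff)
      then show ?thesis by simp
    qed (simp add: srP)
    finally show ?thesis by (simp add: rQ_def)
  qed
  have fXY: "finite (X \<times> Y)" using X Y by auto
  have fsum: "(\<Sum>z\<in>X\<times>Y. f z) = 1"
    by (simp add: sum.cartesian_product' fm1 sP)
  have int1: "(\<integral>\<^sup>+ z. ennreal (f z) \<partial>count_space UNIV) = 1"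
  proof -
    have "(\<integral>\<^sup>+ z. ennreal (f z) \<partial>count_space UNIV) = (\<integral>\<^sup>+ z. ennreal (f z) * indicator (X\<times>Y) z \<partial>count_space UNIV)"
      by (intro nn_integral_cong) (auto simp: indicator_def fout)
    also have "\<dots> = (\<integral>\<^sup>+ z. ennreal (f z) \<partial>count_space (X\<times>Y))"
      by (subst nn_integral_count_space_indicator) auto
    also have "\<dots> = (\<Sum>z\<in>X\<times>Y. ennreal (f z))" using fXY by (simp add: nn_integral_count_space_finite)
    also have "\<dots> = ennreal (\<Sum>z\<in>X\<times>Y. f z)" using f0 by (simp add: sum_ennreal)
    finally show ?thesis using fsum by simp
  qed
  define q where "q = embed_pmf f"
  have pq: "pmf q z = f z" for z unfolding q_def using f0 int1 by (simp add: pmf_embed_pmf)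
  have sq: "set_pmf q \<subseteq> X \<times> Y" unfolding q_def using f0 int1 fout by (auto simp: set_embed_pmf)
  have "map_pmf fst q = P"
  proof (rule pmf_eqI)
    fix x
    show "pmf (map_pmf fst q) x = pmf P x"
    proof (cases "x \<in> X")
      case True
      then show ?thesis using pmf_map_fst_sum[OF Y(1), of q x] sq fm1 pq by auto
    next
      case False
      then have "pmf P x = 0" using X(2) by (meson set_pmf_iff subsetD)
      then show ?thesis using pmf_map_fst_sum[OF Y(1), of q x] sq pq fout False by auto
    qed
  qed
  moreover have "map_pmf snd q = Q"
  proof (rule pmf_eqI)
    fix y
    show "pmf (map_pmf snd q) y = pmf Q y"
    proof (cases "y \<in> Y")
      case True
      then show ?thesis using pmf_map_snd_sum[OF X(1), of q y] sq fm2 pq by auto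
    next
      case False
      then have "pmf Q y = 0" using Y(2) by (meson set_pmf_iff subsetD)
      then show ?thesis using pmf_map_snd_sum[OF X(1), of q y] sq pq fout False by auto
    qed
  qed
  moreover have "measure_pmf.prob q E \<ge> (\<Sum>x\<in>X. c x)"
  proof -
    have "(\<Sum>x\<in>X. c x) = (\<Sum>z\<in>X\<times>Y. g z)"
      by (simp add: sum.cartesian_product' gsum)
    also have "\<dots> = (\<Sum>z\<in>(X\<times>Y) \<inter> E. g z)"
    proof (rule sum.mono_neutral_right[OF fXY])
      show "\<forall>z\<in>X \<times> Y - X \<times> Y \<inter> E. g z = 0"
      proof
        fix z assume "z \<in> X \<times> Y - X \<times> Y \<inter> E"
        then have "z \<notin> set_pmf q'" using E by auto
        then have "pmf q' z = 0" by (simp add: set_pmf_iff)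
        then show "g z = 0" using gle[of z] g0[of z] by linarith
      qed
    qed auto
    also have "\<dots> \<le> (\<Sum>z\<in>(X\<times>Y) \<inter> E. f z)"
      by (intro sum_mono) (use rP0 rQ0 \<delta>0 in \<open>auto simp: f_def\<close>)
    also have "\<dots> = measure_pmf.prob q ((X\<times>Y) \<inter> E)"
      using fXY by (simp add: measure_measure_pmf_finite pq)
    also have "\<dots> \<le> measure_pmf.prob q E"
      by (intro measure_pmf.finite_measure_mono) auto
    finally show ?thesis .
  qed
  ultimately show ?thesis unfolding is_coupling_def c_def by blast
qed



definition ptoS :: "nat \<Rightarrow> (nat set \<Rightarrow> bool) \<Rightarrow> nat set set" where
  "ptoS n f = {e \<in> all_pairs n. f e}"

lemma all_pairs_alt: "all_pairs n = {e. e \<subseteq> {..<n} \<and> card e = 2}"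
proof (intro equalityI subsetI)
  fix e assume "e \<in> all_pairs n"
  then obtain i j where "e = {i,j}" "i < j" "j < n" by (auto simp: all_pairs_def)
  then show "e \<in> {e. e \<subseteq> {..<n} \<and> card e = 2}" by auto
next
  fix e assume "e \<in> {e. e \<subseteq> {..<n} \<and> card e = 2}"
  then obtain x y where e: "e = {x,y}" "x \<noteq> y" "x < n" "y < n" by (auto simp: card_2_iff)
  show "e \<in> all_pairs n"
  proof (cases "x < y")
    case True then show ?thesis using e by (auto simp: all_pairs_def)
  next
    case False
    then have "y < x" using e by auto
    then show ?thesis using e unfolding all_pairs_def by (auto simp: insert_commute)
  qed
qed

lemma finite_all_pairs[simp]: "finite (all_pairs n)"
  by (rule finite_subset[of _ "Pow {..<n}"]) (auto simp: all_pairs_alt)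

lemma card_all_pairs: "card (all_pairs n) = n choose 2"
  by (simp add: all_pairs_alt n_subsets)

lemma pmf_map_Pi_bern:
  assumes B: "B \<subseteq> all_pairs n" and p: "0 \<le> p" "p \<le> 1"
  shows "pmf (map_pmf (ptoS n) (Pi_pmf B False (\<lambda>_. bernoulli_pmf p))) G =
     (if G \<subseteq> B then p ^ card G * (1-p) ^ (card B - card G) else 0)"
proof -
  have fB: "finite B" using B by (rule finite_subset) simp
  let ?M = "Pi_pmf B False (\<lambda>_. bernoulli_pmf p)"
  have supp: "set_pmf ?M \<subseteq> {f. \<forall>x. x \<notin> B \<longrightarrow> f x = False}"
    by (rule set_Pi_pmf_subset[OF fB])
  have ptoS_eq: "ptoS n f = {e. f e}" if "f \<in> set_pmf ?M" for f
    using supp that B unfolding ptoS_def by auto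
  have "pmf (map_pmf (ptoS n) ?M) G = measure_pmf.prob ?M (ptoS n -` {G})" by (simp add: pmf_map)
  also have "\<dots> = (if G \<subseteq> B then p ^ card G * (1-p) ^ (card B - card G) else 0)"
  proof (cases "G \<subseteq> B")
    case True
    have "ptoS n -` {G} \<inter> set_pmf ?M = {\<lambda>e. e \<in> G} \<inter> set_pmf ?M"
    proof (intro equalityI subsetI)
      fix f assume "f \<in> ptoS n -` {G} \<inter> set_pmf ?M"
      then have "{e. f e} = G" "f \<in> set_pmf ?M" using ptoS_eq by auto
      then show "f \<in> {\<lambda>e. e \<in> G} \<inter> set_pmf ?M" by auto
    next
      fix f assume "f \<in> {\<lambda>e. e \<in> G} \<inter> set_pmf ?M"
      then show "f \<in> ptoS n -` {G} \<inter> set_pmf ?M" using ptoS_eq by auto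
    qed
    then have "measure_pmf.prob ?M (ptoS n -` {G}) = measure_pmf.prob ?M {\<lambda>e. e \<in> G}"
      by (rule measure_pmf_cong_supp)
    also have "\<dots> = pmf ?M (\<lambda>e. e \<in> G)" by (simp add: measure_pmf_single)
    also have "\<dots> = (\<Prod>e\<in>B. pmf (bernoulli_pmf p) (e \<in> G))"
      using True fB by (intro pmf_Pi') auto
    also have "\<dots> = (\<Prod>e\<in>B. if e \<in> G then p else 1 - p)"
      using p by (intro prod.cong) auto
    also have "\<dots> = p ^ card G * (1-p) ^ (card B - card G)"
    proof -
      have "B \<inter> {x. x \<in> G} = G" "B \<inter> - {x. x \<in> G} = B - G" using True by auto
      moreover have "card (B - G) = card B - card G" using True fB
        by (meson card_Diff_subset finite_subset)
      ultimately show ?thesis using fB by (simp add: prod.If_cases)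
    qed
    finally show ?thesis using True by simp
  next
    case False
    have "ptoS n -` {G} \<inter> set_pmf ?M = {} \<inter> set_pmf ?M"
      using False ptoS_eq supp by fastforce
    then have "measure_pmf.prob ?M (ptoS n -` {G}) = measure_pmf.prob ?M {}"
      by (rule measure_pmf_cong_supp)
    then show ?thesis using False by simp
  qed
  finally show ?thesis .
qed

definition Bm :: "nat \<Rightarrow> real \<Rightarrow> nat set set \<Rightarrow> nat set set pmf" where
  "Bm n p D = map_pmf (ptoS n) (Pi_pmf (all_pairs n - D) False (\<lambda>_. bernoulli_pmf p))"

lemma gnp_Bm: "gnp n p = Bm n p {}"
  unfolding gnp_def Bm_def ptoS_def[abs_def] by simp

lemma pmf_gnp:
  assumes "0 \<le> p" "p \<le> 1"
  shows "pmf (gnp n p) G = (if G \<subseteq> all_pairs n then p ^ card G * (1-p) ^ (card (all_pairs n) - card G) else 0)"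
  unfolding gnp_Bm Bm_def using pmf_map_Pi_bern[of "all_pairs n" n p G] assms by simp

lemma set_pmf_Bm: "set_pmf (Bm n p D) \<subseteq> Pow (all_pairs n)"
  by (auto simp: Bm_def ptoS_def)

lemma pmf_Bm:
  assumes D: "D \<subseteq> all_pairs n" and p: "0 \<le> p" "p < 1"
  shows "pmf (Bm n p D) G = (if G \<inter> D = {} then pmf (gnp n p) G / (1-p) ^ card D else 0)"
proof -
  have fD: "finite D" using D by (rule finite_subset) simp
  have cD: "card (all_pairs n - D) = card (all_pairs n) - card D"
    using D fD by (simp add: card_Diff_subset)
  have "pmf (Bm n p D) G = (if G \<subseteq> all_pairs n - D then p ^ card G * (1-p) ^ (card (all_pairs n - D) - card G) else 0)"
    unfolding Bm_def using p by (intro pmf_map_Pi_bern) auto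
  also have "\<dots> = (if G \<inter> D = {} then pmf (gnp n p) G / (1-p) ^ card D else 0)"
  proof (cases "G \<subseteq> all_pairs n \<and> G \<inter> D = {}")
    case True
    then have "card G + card D \<le> card (all_pairs n)"
      by (metis card_Un_disjoint card_mono finite_all_pairs finite_subset le_sup_iff D)
    then have "card (all_pairs n) - card G = (card (all_pairs n) - card D - card G) + card D" by linarith
    then have "(1-p) ^ (card (all_pairs n) - card G) = (1-p) ^ (card (all_pairs n) - card D - card G) * (1-p) ^ card D"
      by (simp add: power_add)
    then show ?thesis using True p cD by (auto simp: pmf_gnp)
  next
    case False
    then show ?thesis using p by (auto simp: pmf_gnp)
  qed
  finally show ?thesis .
qed

lemma sum_indep:
  assumes D: "D \<subseteq> all_pairs n" and p: "0 \<le> p" "p < 1"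
  shows "(\<Sum>G\<in>Pow (all_pairs n). pmf (gnp n p) G * (if G \<inter> D = {} then 1 else 0)) = (1-p) ^ card D"
proof -
  have "1 = (\<Sum>G\<in>Pow (all_pairs n). pmf (Bm n p D) G)"
    using set_pmf_Bm by (intro sum_pmf_eq_1[symmetric]) auto
  also have "\<dots> = (\<Sum>G\<in>Pow (all_pairs n). pmf (gnp n p) G * (if G \<inter> D = {} then 1 else 0) / (1-p) ^ card D)"
    by (intro sum.cong refl) (simp add: pmf_Bm assms)
  also have "\<dots> = (\<Sum>G\<in>Pow (all_pairs n). pmf (gnp n p) G * (if G \<inter> D = {} then 1 else 0)) / (1-p) ^ card D"
    by (simp add: sum_divide_distrib)
  finally have h: "1 = (\<Sum>G\<in>Pow (all_pairs n). pmf (gnp n p) G * (if G \<inter> D = {} then 1 else 0)) / (1-p) ^ card D" .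
  have "(1-p) ^ card D \<noteq> 0" using p by simp
  then show ?thesis using h by (simp add: eq_divide_eq)
qed



lemma proper_colouring_exists: "proper_colouring m H m id"
  by (auto simp: proper_colouring_def)

lemma chrom_step:
  assumes bij: "bij_betw \<sigma> {0..<m} ({..<n} - S)"
    and G: "G \<subseteq> all_pairs n" and GS: "\<forall>e\<in>G. \<not> e \<subseteq> S"
    and H: "\<forall>e'\<in>all_pairs m. \<sigma> ` e' \<in> G \<longrightarrow> e' \<in> H"
  shows "chromatic_number n G \<le> chromatic_number m H + 1"
proof -
  define k where "k = chromatic_number m H"
  have "\<exists>c. proper_colouring m H k c"
    unfolding k_def chromatic_number_def
    by (rule LeastI_ex) (use proper_colouring_exists in blast)
  then obtain c where c: "proper_colouring m H k c" by blast
  define iv where "iv = the_inv_into {0..<m} \<sigma>"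
  have inj: "inj_on \<sigma> {0..<m}" using bij by (simp add: bij_betw_def)
  have ivb: "bij_betw iv ({..<n} - S) {0..<m}" unfolding iv_def using bij by (rule bij_betw_the_inv_into)
  have ivm: "iv v < m" if "v < n" "v \<notin> S" for v using ivb that by (auto dest: bij_betwE)
  have siv: "\<sigma> (iv v) = v" if "v < n" "v \<notin> S" for v
    unfolding iv_def using that bij by (intro f_the_inv_into_f inj) (auto simp: bij_betw_def)
  have ivinj: "iv u \<noteq> iv v" if "u < n" "u \<notin> S" "v < n" "v \<notin> S" "u \<noteq> v" for u v
    using siv that by metis
  define c' where "c' v = (if v \<in> S then k else c (iv v))" for v
  have cH: "c v < k" if "v < m" for v using c that by (auto simp: proper_colouring_def)
  have "proper_colouring n G (k+1) c'"
    unfolding proper_colouring_def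
  proof (intro conjI allI impI)
    fix v assume "v < n"
    then show "c' v < k + 1" using cH ivm by (auto simp: c'_def less_Suc_eq)
  next
    fix u v assume uv: "{u, v} \<in> G \<and> u \<noteq> v"
    then have un: "u < n" "v < n" using G by (auto simp: all_pairs_alt)
    have nS: "\<not> (u \<in> S \<and> v \<in> S)" using GS uv by auto
    show "c' u \<noteq> c' v"
    proof (cases "u \<in> S")
      case True
      then show ?thesis using nS un cH ivm by (auto simp: c'_def)
    next
      case uS: False
      show ?thesis
      proof (cases "v \<in> S")
        case True
        then show ?thesis using uS un cH ivm by (auto simp: c'_def)
      next
        case vS: False
        have e': "{iv u, iv v} \<in> all_pairs m"
          unfolding all_pairs_alt using ivm[OF un(1) uS] ivm[OF un(2) vS] ivinj[OF un(1) uS un(2) vS] uv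
          by auto
        moreover have "\<sigma> ` {iv u, iv v} = {u, v}" using siv un uS vS by auto
        ultimately have "{iv u, iv v} \<in> H" using H uv by auto
        then have "c (iv u) \<noteq> c (iv v)" using c ivinj[OF un(1) uS un(2) vS] uv
          by (auto simp: proper_colouring_def)
        then show ?thesis using uS vS by (auto simp: c'_def)
      qed
    qed
  qed
  then have "chromatic_number n G \<le> k + 1"
    unfolding chromatic_number_def by (intro Least_le) blast
  then show ?thesis by (simp add: k_def)
qed

definition subsA :: "nat \<Rightarrow> nat \<Rightarrow> nat set set" where
  "subsA n a = {S. S \<subseteq> {..<n} \<and> card S = a}"
definition pairsS :: "nat \<Rightarrow> nat set \<Rightarrow> nat set set" where
  "pairsS n S = {e \<in> all_pairs n. e \<subseteq> S}"
definition Ac :: "nat \<Rightarrow> nat set \<Rightarrow> nat set set" where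
  "Ac n S = {e \<in> all_pairs n. e \<inter> S = {}}"
definition sig :: "nat \<Rightarrow> nat \<Rightarrow> nat set \<Rightarrow> nat \<Rightarrow> nat" where
  "sig n m S = (SOME \<sigma>. bij_betw \<sigma> {0..<m} ({..<n} - S))"
definition hS :: "nat \<Rightarrow> nat \<Rightarrow> nat set \<Rightarrow> nat set \<Rightarrow> nat set" where
  "hS n m S e = (if e \<in> all_pairs m then sig n m S ` e else {})"
definition relab :: "nat \<Rightarrow> nat \<Rightarrow> nat set \<Rightarrow> (nat set \<Rightarrow> bool) \<Rightarrow> nat set set" where
  "relab n m S f = ptoS m ((\<lambda>x. if x \<in> Ac n S then f x else False) \<circ> hS n m S)"
definition cplS :: "nat \<Rightarrow> nat \<Rightarrow> real \<Rightarrow> nat set \<Rightarrow> (nat set set \<times> nat set set) pmf" where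
  "cplS n m p S = map_pmf (\<lambda>f. (ptoS n f, relab n m S f))
      (Pi_pmf (all_pairs n - pairsS n S) False (\<lambda>_. bernoulli_pmf p))"

lemma sig_bij:
  assumes "S \<subseteq> {..<n}" "m = n - card S"
  shows "bij_betw (sig n m S) {0..<m} ({..<n} - S)"
proof -
  have "card ({..<n} - S) = m" using assms by (simp add: card_Diff_subset finite_subset)
  then have "\<exists>\<sigma>. bij_betw \<sigma> {0..<m} ({..<n} - S)"
    using ex_bij_betw_nat_finite[of "{..<n} - S"] by auto
  then show ?thesis unfolding sig_def by (rule someI_ex)
qed

lemma hS_bij:
  assumes "S \<subseteq> {..<n}" "m = n - card S"
  shows "bij_betw (hS n m S) (all_pairs m) (Ac n S)"
proof -
  define \<sigma> where "\<sigma> = sig n m S"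
  have bij: "bij_betw \<sigma> {0..<m} ({..<n} - S)" unfolding \<sigma>_def using assms by (rule sig_bij)
  have inj: "inj_on \<sigma> {0..<m}" using bij by (simp add: bij_betw_def)
  have im: "\<sigma> ` {0..<m} = {..<n} - S" using bij by (simp add: bij_betw_def)
  have sub: "e \<subseteq> {0..<m}" if "e \<in> all_pairs m" for e using that by (auto simp: all_pairs_alt)
  have "bij_betw (image \<sigma>) (all_pairs m) (Ac n S)"
  proof (rule bij_betw_imageI)
    show "inj_on (image \<sigma>) (all_pairs m)"
      using inj sub by (auto simp: inj_on_def inj_on_image_eq_iff)
    show "image \<sigma> ` all_pairs m = Ac n S"
    proof (intro equalityI subsetI)
      fix x assume "x \<in> image \<sigma> ` all_pairs m"
      then obtain e where e: "e \<in> all_pairs m" "x = \<sigma> ` e" by blast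
      have "card x = card e" using e sub inj by (metis card_image inj_on_subset)
      also have "\<dots> = 2" using e by (auto simp: all_pairs_alt)
      finally have "card x = 2" .
      moreover have "x \<subseteq> {..<n} - S"
      proof -
        have "\<sigma> ` e \<subseteq> \<sigma> ` {0..<m}" using sub[OF e(1)] by (rule image_mono)
        then show ?thesis using e(2) im by simp
      qed
      ultimately show "x \<in> Ac n S" by (auto simp: Ac_def all_pairs_alt)
    next
      fix x assume x: "x \<in> Ac n S"
      then have xs: "x \<subseteq> {..<n} - S" "card x = 2" by (auto simp: Ac_def all_pairs_alt)
      define e where "e = {y \<in> {0..<m}. \<sigma> y \<in> x}"
      have ex: "\<sigma> ` e = x"
      proof (intro equalityI subsetI)
        fix y assume "y \<in> \<sigma> ` e" then show "y \<in> x" by (auto simp: e_def)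
      next
        fix y assume y: "y \<in> x"
        then have "y \<in> \<sigma> ` {0..<m}" using xs(1) im by auto
        then obtain z where "z \<in> {0..<m}" "y = \<sigma> z" by auto
        then show "y \<in> \<sigma> ` e" using y by (auto simp: e_def)
      qed
      have "e \<subseteq> {0..<m}" by (auto simp: e_def)
      then have "card e = card x" using ex inj by (metis card_image inj_on_subset)
      then have "e \<in> all_pairs m" using xs \<open>e \<subseteq> {0..<m}\<close> by (auto simp: all_pairs_alt)
      then show "x \<in> image \<sigma> ` all_pairs m" using ex by blast
    qed
  qed
  then show ?thesis
    by (rule bij_betw_cong[THEN iffD1, rotated]) (auto simp: hS_def \<sigma>_def)
qed

lemma Ac_sub: "Ac n S \<subseteq> all_pairs n - pairsS n S"
proof
  fix x assume "x \<in> Ac n S"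
  then have x: "x \<in> all_pairs n" "x \<inter> S = {}" by (auto simp: Ac_def)
  then have "x \<noteq> {}" by (auto simp: all_pairs_def)
  then have "\<not> x \<subseteq> S" using x by blast
  then show "x \<in> all_pairs n - pairsS n S" using x by (auto simp: pairsS_def)
qed

lemma cplS_fst: "map_pmf fst (cplS n m p S) = Bm n p (pairsS n S)"
  by (simp add: cplS_def Bm_def map_pmf_comp)

lemma gnp_alt: "gnp n p = map_pmf (ptoS n) (Pi_pmf (all_pairs n) False (\<lambda>_. bernoulli_pmf p))"
  unfolding gnp_def ptoS_def[abs_def] by simp

lemma cplS_snd:
  assumes "S \<subseteq> {..<n}" "m = n - card S"
  shows "map_pmf snd (cplS n m p S) = gnp m p"
proof -
  let ?B = "\<lambda>_::nat set. bernoulli_pmf p"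
  have "Pi_pmf (all_pairs m) False ?B = map_pmf (\<lambda>g. g \<circ> hS n m S) (Pi_pmf (Ac n S) False ?B)"
  proof (rule Pi_pmf_bij_betw)
    show "bij_betw (hS n m S) (all_pairs m) (Ac n S)" using assms by (rule hS_bij)
    show "hS n m S x \<notin> Ac n S" if "x \<notin> all_pairs m" for x
      using that by (auto simp: hS_def Ac_def all_pairs_alt)
  qed simp
  also have "Pi_pmf (Ac n S) False ?B = map_pmf (\<lambda>f x. if x \<in> Ac n S then f x else False)
       (Pi_pmf (all_pairs n - pairsS n S) False ?B)"
    by (rule Pi_pmf_subset) (simp_all add: Ac_sub)
  finally show ?thesis
    by (simp add: gnp_alt cplS_def map_pmf_comp relab_def o_def)
qed

lemma cplS_E:
  assumes "S \<subseteq> {..<n}" "m = n - card S" "z \<in> set_pmf (cplS n m p S)"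
  shows "chromatic_number n (fst z) \<le> chromatic_number m (snd z) + 1"
proof -
  let ?M = "Pi_pmf (all_pairs n - pairsS n S) False (\<lambda>_. bernoulli_pmf p)"
  obtain f where f: "f \<in> set_pmf ?M" "z = (ptoS n f, relab n m S f)"
    using assms(3) by (auto simp: cplS_def)
  have fo: "\<not> f x" if "x \<notin> all_pairs n - pairsS n S" for x
    using set_Pi_pmf_subset[of "all_pairs n - pairsS n S" False "\<lambda>_. bernoulli_pmf p"] f(1) that by auto
  have bij: "bij_betw (sig n m S) {0..<m} ({..<n} - S)" using assms by (intro sig_bij)
  have hb: "bij_betw (hS n m S) (all_pairs m) (Ac n S)" using assms by (intro hS_bij)
  show ?thesis unfolding f(2) fst_conv snd_conv
  proof (rule chrom_step[OF bij])
    show "ptoS n f \<subseteq> all_pairs n" by (auto simp: ptoS_def)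
    show "\<forall>e\<in>ptoS n f. \<not> e \<subseteq> S" using fo by (auto simp: ptoS_def pairsS_def)
    show "\<forall>e'\<in>all_pairs m. sig n m S ` e' \<in> ptoS n f \<longrightarrow> e' \<in> relab n m S f"
    proof (intro ballI impI)
      fix e' assume e': "e' \<in> all_pairs m" "sig n m S ` e' \<in> ptoS n f"
      have "hS n m S e' = sig n m S ` e'" using e' by (simp add: hS_def)
      moreover have "hS n m S e' \<in> Ac n S" using hb e' by (auto dest: bij_betwE)
      ultimately show "e' \<in> relab n m S f" using e' by (auto simp: relab_def ptoS_def)
    qed
  qed
qed



lemma tv_bound:
  fixes w Y :: "'a \<Rightarrow> real"
  assumes I: "finite I" and w0: "\<And>i. i \<in> I \<Longrightarrow> 0 \<le> w i"
    and s1: "(\<Sum>i\<in>I. w i) = 1" and s2: "(\<Sum>i\<in>I. w i * Y i) = 1"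
  shows "(\<Sum>i\<in>I. min (w i) (w i * Y i)) \<ge> 1 - sqrt ((\<Sum>i\<in>I. w i * (Y i)^2) - 1) / 2"
proof -
  define c where "c = (\<Sum>i\<in>I. w i * \<bar>1 - Y i\<bar>)"
  have mn: "min (w i) (w i * Y i) = w i - (w i * \<bar>1 - Y i\<bar>) / 2 - (w i - w i * Y i) / 2" if "i \<in> I" for i
  proof (cases "Y i \<le> 1")
    case True
    then have "w i * Y i \<le> w i * 1" using w0[OF that] by (intro mult_left_mono) auto
    then show ?thesis using True by (simp add: min_def algebra_simps)
  next
    case False
    then have "w i * 1 \<le> w i * Y i" using w0[OF that] by (intro mult_left_mono) auto
    then have m: "min (w i) (w i * Y i) = w i" by (simp add: min_def)
    have "\<bar>1 - Y i\<bar> = Y i - 1" using False by simp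
    then have "w i * \<bar>1 - Y i\<bar> = w i * Y i - w i" by (simp add: algebra_simps)
    then show ?thesis using m by (simp add: field_simps)
  qed
  have "(\<Sum>i\<in>I. min (w i) (w i * Y i)) = (\<Sum>i\<in>I. w i) - c / 2 - ((\<Sum>i\<in>I. w i) - (\<Sum>i\<in>I. w i * Y i)) / 2"
    unfolding c_def
    by (subst sum.cong[OF refl mn], assumption) (simp only: sum_subtractf flip: sum_divide_distrib)
  also have "\<dots> = 1 - c / 2" using s1 s2 by simp
  finally have eq: "(\<Sum>i\<in>I. min (w i) (w i * Y i)) = 1 - c / 2" .
  have sq: "(\<Sum>i\<in>I. w i * (1 - Y i)^2) = (\<Sum>i\<in>I. w i * (Y i)^2) - 1"
  proof -
    have "(\<Sum>i\<in>I. w i * (1 - Y i)^2) = (\<Sum>i\<in>I. w i - 2 * (w i * Y i) + w i * (Y i)^2)"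
      by (intro sum.cong refl) (simp add: power2_eq_square algebra_simps)
    also have "\<dots> = (\<Sum>i\<in>I. w i) - 2 * (\<Sum>i\<in>I. w i * Y i) + (\<Sum>i\<in>I. w i * (Y i)^2)"
      by (simp add: sum.distrib sum_subtractf sum_distrib_left)
    finally show ?thesis using s1 s2 by simp
  qed
  have "0 \<le> (\<Sum>i\<in>I. w i * (\<bar>1 - Y i\<bar> - c)^2)"
    using w0 by (intro sum_nonneg) auto
  also have "(\<Sum>i\<in>I. w i * (\<bar>1 - Y i\<bar> - c)^2) = (\<Sum>i\<in>I. w i * (1 - Y i)^2 - 2 * c * (w i * \<bar>1 - Y i\<bar>) + c^2 * w i)"
    by (intro sum.cong refl) (simp add: power2_eq_square algebra_simps abs_mult_self_eq)
  also have "\<dots> = (\<Sum>i\<in>I. w i * (1 - Y i)^2) - 2 * c * c + c^2 * (\<Sum>i\<in>I. w i)"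
    by (simp add: sum.distrib sum_subtractf sum_distrib_left c_def)
  finally have "c^2 \<le> (\<Sum>i\<in>I. w i * (Y i)^2) - 1" using s1 sq by (simp add: power2_eq_square)
  then have "c \<le> sqrt ((\<Sum>i\<in>I. w i * (Y i)^2) - 1)" by (rule real_le_rsqrt)
  then show ?thesis using eq by simp
qed

definition EY2 :: "nat \<Rightarrow> nat \<Rightarrow> real \<Rightarrow> real" where
  "EY2 n a p = (\<Sum>S\<in>subsA n a. \<Sum>T\<in>subsA n a. (1/(1-p)) ^ (card (S \<inter> T) choose 2))
      / (real (card (subsA n a)))^2"

lemma finite_subsA[simp]: "finite (subsA n a)"
  by (rule finite_subset[of _ "Pow {..<n}"]) (auto simp: subsA_def)

lemma card_subsA: "card (subsA n a) = n choose a"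
  unfolding subsA_def by (subst n_subsets) auto

lemma subsA_ne: "a \<le> n \<Longrightarrow> subsA n a \<noteq> {}"
  unfolding subsA_def by (rule ccontr) (use subsetD in \<open>auto dest: spec[of _ "{..<a}"]\<close>)

lemma pairsS_alt: "S \<subseteq> {..<n} \<Longrightarrow> pairsS n S = {e. e \<subseteq> S \<and> card e = 2}"
  by (auto simp: pairsS_def all_pairs_alt)

lemma card_pairsS: "S \<subseteq> {..<n} \<Longrightarrow> card (pairsS n S) = card S choose 2"
  by (simp add: pairsS_alt n_subsets finite_subset)

lemma pairsS_Int: "pairsS n S \<inter> pairsS n T = pairsS n (S \<inter> T)"
  by (auto simp: pairsS_def)

lemma pairsS_sub: "pairsS n S \<subseteq> all_pairs n"
  by (auto simp: pairsS_def)

lemma fixed_coupling: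
  assumes p: "0 < p" "p < 1" and a: "a \<le> n"
  shows "\<exists>q. is_coupling q (gnp n p) (gnp (n - a) p) \<and>
    measure_pmf.prob q {(G, H). chromatic_number n G \<le> chromatic_number (n - a) H + 1}
      \<ge> 1 - sqrt (EY2 n a p - 1) / 2"
proof -
  define SS where "SS = subsA n a"
  have SSf: "finite SS" and SSne: "SS \<noteq> {}" using a by (auto simp: SS_def subsA_ne)
  have SSp: "S \<subseteq> {..<n}" "card S = a" if "S \<in> SS" for S using that by (auto simp: SS_def subsA_def)
  define N where "N = real (card SS)"
  have N0: "N > 0" using SSf SSne by (simp add: N_def card_gt_0_iff)
  define c where "c = (1-p) ^ (a choose 2)"
  have c0: "c > 0" using p by (simp add: c_def)
  define E where "E = {(G, H). chromatic_number n G \<le> chromatic_number (n - a) H + 1}"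
  define P where "P = gnp n p"
  define P' where "P' = pmf_of_set SS \<bind> (\<lambda>S. Bm n p (pairsS n S))"
  define q' where "q' = pmf_of_set SS \<bind> (\<lambda>S. cplS n (n-a) p S)"
  have sSS: "set_pmf (pmf_of_set SS) = SS" using SSf SSne by simp
  have cpl: "is_coupling q' P' (gnp (n-a) p)"
    unfolding is_coupling_def
  proof
    show "map_pmf fst q' = P'" unfolding q'_def P'_def map_bind_pmf
      by (intro bind_pmf_cong refl) (simp add: cplS_fst)
    have "map_pmf snd q' = pmf_of_set SS \<bind> (\<lambda>S. gnp (n-a) p)" unfolding q'_def map_bind_pmf
      by (intro bind_pmf_cong refl) (use SSp sSS in \<open>auto intro!: cplS_snd\<close>)
    then show "map_pmf snd q' = gnp (n-a) p" by simp
  qed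
  have Eq: "set_pmf q' \<subseteq> E"
  proof
    fix z assume "z \<in> set_pmf q'"
    then obtain S where S: "S \<in> SS" "z \<in> set_pmf (cplS n (n-a) p S)"
      unfolding q'_def using sSS by auto
    then have "chromatic_number n (fst z) \<le> chromatic_number (n-a) (snd z) + 1"
      using SSp[OF S(1)] by (intro cplS_E) auto
    then show "z \<in> E" by (cases z) (auto simp: E_def)
  qed
  have setP: "set_pmf P \<subseteq> Pow (all_pairs n)" unfolding P_def gnp_Bm by (rule set_pmf_Bm)
  have setP': "set_pmf P' \<subseteq> Pow (all_pairs n)" unfolding P'_def set_bind_pmf by (intro UN_least set_pmf_Bm)
  have setQ: "set_pmf (gnp (n-a) p) \<subseteq> Pow (all_pairs (n-a))" unfolding gnp_Bm by (rule set_pmf_Bm)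
  obtain q where q: "is_coupling q P (gnp (n-a) p)"
     "measure_pmf.prob q E \<ge> (\<Sum>G\<in>Pow (all_pairs n). min (pmf P G) (pmf P' G))"
    using glue[OF cpl _ setP setP' _ setQ Eq] by auto
  define ind where "ind S G = (if G \<inter> pairsS n S = {} then 1 else (0::real))" for S G
  define Y where "Y G = (\<Sum>S\<in>SS. ind S G) / (N * c)" for G
  have pP': "pmf P' G = pmf P G * Y G" for G
  proof -
    have "pmf P' G = (\<Sum>S\<in>SS. pmf (Bm n p (pairsS n S)) G) / N"
      unfolding P'_def pmf_bind N_def using SSf SSne by (simp add: integral_pmf_of_set)
    also have "\<dots> = (\<Sum>S\<in>SS. pmf P G * ind S G / c) / N"
      using p by (intro arg_cong2[where f="(/)"] sum.cong refl)
        (auto simp: pmf_Bm pairsS_sub card_pairsS SSp ind_def c_def P_def)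
    also have "\<dots> = pmf P G * Y G"
      by (simp add: Y_def sum_divide_distrib[symmetric] sum_distrib_left[symmetric])
    finally show ?thesis .
  qed
  have s1: "(\<Sum>G\<in>Pow (all_pairs n). pmf P G) = 1" using setP by (intro sum_pmf_eq_1) auto
  have s2: "(\<Sum>G\<in>Pow (all_pairs n). pmf P G * Y G) = 1"
    using setP' by (subst pP'[symmetric]) (intro sum_pmf_eq_1, auto)
  have tv: "(\<Sum>G\<in>Pow (all_pairs n). min (pmf P G) (pmf P G * Y G))
      \<ge> 1 - sqrt ((\<Sum>G\<in>Pow (all_pairs n). pmf P G * (Y G)^2) - 1) / 2"
    by (rule tv_bound[OF _ _ s1 s2]) auto
  have indm: "ind S G * ind T G = (if G \<inter> (pairsS n S \<union> pairsS n T) = {} then 1 else 0)" for S T G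
    by (auto simp: ind_def)
  have key: "(1-p) ^ card (pairsS n S \<union> pairsS n T) = c^2 * (1/(1-p)) ^ (card (S \<inter> T) choose 2)"
    if "S \<in> SS" "T \<in> SS" for S T
  proof -
    have fin: "finite (pairsS n S)" "finite (pairsS n T)"
      by (rule finite_subset[OF pairsS_sub], simp)+
    have "card (pairsS n S \<union> pairsS n T) + (card (S \<inter> T) choose 2) = 2 * (a choose 2)"
      using card_Un_Int[OF fin] SSp[OF that(1)] SSp[OF that(2)]
      by (simp add: pairsS_Int card_pairsS le_infI1)
    then have "(1-p) ^ card (pairsS n S \<union> pairsS n T) * (1-p) ^ (card (S \<inter> T) choose 2) = c^2"
      apply -
    proof -
      assume h: "card (pairsS n S \<union> pairsS n T) + (card (S \<inter> T) choose 2) = 2 * (a choose 2)"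
      have "(1-p) ^ (2 * (a choose 2)) = c^2" unfolding c_def by (metis power_mult mult.commute)
      then show ?thesis using h by (metis power_add)
    qed
    then show ?thesis using p by (simp add: power_one_over field_simps)
  qed
  have "(\<Sum>G\<in>Pow (all_pairs n). pmf P G * (Y G)^2)
      = (\<Sum>G\<in>Pow (all_pairs n). \<Sum>S\<in>SS. \<Sum>T\<in>SS. pmf P G * (ind S G * ind T G) / (N*c)^2)"
  proof (intro sum.cong refl)
    fix G
    have "(Y G)^2 = (\<Sum>S\<in>SS. \<Sum>T\<in>SS. ind S G * ind T G) / (N*c)^2"
      unfolding Y_def power_divide by (simp only: power2_eq_square sum_product)
    then show "pmf P G * (Y G)^2 = (\<Sum>S\<in>SS. \<Sum>T\<in>SS. pmf P G * (ind S G * ind T G) / (N*c)^2)"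
      by (simp add: sum_distrib_left sum_divide_distrib)
  qed
  also have "\<dots> = (\<Sum>S\<in>SS. \<Sum>T\<in>SS. (\<Sum>G\<in>Pow (all_pairs n). pmf P G * (ind S G * ind T G)) / (N*c)^2)"
    by (simp add: sum.swap[of _ "Pow (all_pairs n)"] sum_divide_distrib)
  also have "\<dots> = (\<Sum>S\<in>SS. \<Sum>T\<in>SS. (1-p) ^ card (pairsS n S \<union> pairsS n T) / (N*c)^2)"
    unfolding indm P_def using p by (intro sum.cong refl) (simp add: sum_indep pairsS_sub)
  also have "\<dots> = (\<Sum>S\<in>SS. \<Sum>T\<in>SS. (1/(1-p)) ^ (card (S \<inter> T) choose 2)) / N^2"
    using c0 by (simp add: key sum_divide_distrib power_mult_distrib cong: sum.cong)
  also have "\<dots> = EY2 n a p" by (simp add: EY2_def SS_def N_def)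
  finally have "(\<Sum>G\<in>Pow (all_pairs n). pmf P G * (Y G)^2) = EY2 n a p" .
  then have "measure_pmf.prob q E \<ge> 1 - sqrt (EY2 n a p - 1) / 2"
    using q(2) tv by (simp add: pP')
  then show ?thesis using q(1) unfolding P_def E_def by blast
qed



lemma card_overlap:
  assumes S: "S \<subseteq> {..<n}" "card S = a"
  shows "card {T\<in>subsA n a. card (S \<inter> T) = i} \<le> (a choose i) * ((n - a) choose (a - i))"
proof -
  have fS: "finite S" using S(1) finite_subset by blast
  define U where "U = {U. U \<subseteq> S \<and> card U = i}"
  define W where "W = {W. W \<subseteq> {..<n} - S \<and> card W = a - i}"
  have fU: "finite U" unfolding U_def using fS by simp
  have fW: "finite W" unfolding W_def by simp
  have "card {T\<in>subsA n a. card (S \<inter> T) = i} \<le> card (U \<times> W)"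
  proof (rule card_inj_on_le[where f = "\<lambda>T. (S \<inter> T, T - S)"])
    show "inj_on (\<lambda>T. (S \<inter> T, T - S)) {T \<in> subsA n a. card (S \<inter> T) = i}"
    proof (rule inj_onI)
      fix T1 T2 assume "(S \<inter> T1, T1 - S) = (S \<inter> T2, T2 - S)"
      then have "S \<inter> T1 = S \<inter> T2" "T1 - S = T2 - S" by auto
      then show "T1 = T2" by blast
    qed
    show "(\<lambda>T. (S \<inter> T, T - S)) ` {T \<in> subsA n a. card (S \<inter> T) = i} \<subseteq> U \<times> W"
    proof
      fix x assume "x \<in> (\<lambda>T. (S \<inter> T, T - S)) ` {T \<in> subsA n a. card (S \<inter> T) = i}"
      then obtain T where T: "T \<in> subsA n a" "i = card (S \<inter> T)" "x = (S \<inter> T, T - S)" by auto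
      have fT: "finite T" "card T = a" "T \<subseteq> {..<n}" using T(1) by (auto simp: subsA_def finite_subset)
      have "card (T - S) = card T - card (T \<inter> S)" using fT(1) by (simp add: card_Diff_subset_Int)
      then have "card (T - S) = a - i" using fT T(2) by (simp add: Int_commute)
      then show "x \<in> U \<times> W" using T(2,3) fT(3) by (auto simp: U_def W_def)
    qed
    show "finite (U \<times> W)" using fU fW by simp
  qed
  also have "card (U \<times> W) = (a choose i) * ((n - a) choose (a - i))"
  proof -
    have "card U = a choose i" unfolding U_def using fS S by (simp add: n_subsets)
    moreover have "card ({..<n} - S) = n - a" using S fS by (simp add: card_Diff_subset)
    then have "card W = (n - a) choose (a - i)" unfolding W_def by (simp add: n_subsets)
    ultimately show ?thesis by (simp add: card_cartesian_product)
  qed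
  finally show ?thesis .
qed

definition mu :: "nat \<Rightarrow> nat \<Rightarrow> real \<Rightarrow> real" where
  "mu n a p = real (n choose a) * (1 - p) ^ (a choose 2)"

definition sterm :: "nat \<Rightarrow> nat \<Rightarrow> real \<Rightarrow> nat \<Rightarrow> real" where
  "sterm n a p i = real (a choose i) * real ((n - a) choose (a - i)) * (1 - p) ^ (a choose 2) * (1/(1-p)) ^ (i choose 2)"

lemma inner_bound:
  assumes p: "0 < p" "p < 1" and S: "S \<in> subsA n a"
  shows "(\<Sum>T\<in>subsA n a. (1/(1-p)) ^ (card (S \<inter> T) choose 2))
     \<le> real (card (subsA n a)) + (1/(1-p)) ^ (a choose 2)
        + (\<Sum>i\<in>{2..<a}. real (a choose i) * real ((n - a) choose (a - i)) * (1/(1-p)) ^ (i choose 2))"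
proof -
  define b where "b = 1/(1-p)"
  have b1: "1 \<le> b" using p by (simp add: b_def)
  have Sp: "S \<subseteq> {..<n}" "card S = a" "finite S" using S by (auto simp: subsA_def finite_subset)
  define h where "h T = (if 2 \<le> card (S \<inter> T) \<and> card (S \<inter> T) < a then b ^ (card (S \<inter> T) choose 2) else 0)" for T
  have pt: "b ^ (card (S \<inter> T) choose 2) \<le> 1 + (if T = S then b ^ (a choose 2) else 0) + h T"
    if T: "T \<in> subsA n a" for T
  proof -
    have fT: "finite T" "card T = a" using T by (auto simp: subsA_def finite_subset)
    have h0: "0 \<le> h T" using b1 by (simp add: h_def)
    have bp: "0 \<le> b ^ k" for k using b1 by simp
    consider "card (S \<inter> T) < 2" | "T = S" | "2 \<le> card (S \<inter> T) \<and> card (S \<inter> T) < a \<and> T \<noteq> S"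
    proof -
      have le: "card (S \<inter> T) \<le> a" using Sp by (metis card_mono inf_le1)
      have "card (S \<inter> T) = a \<Longrightarrow> T = S"
      proof -
        assume "card (S \<inter> T) = a"
        then have "S \<inter> T = S" using Sp by (metis card_subset_eq inf_le1)
        then have "S \<subseteq> T" by blast
        then show "T = S" using fT Sp by (metis card_subset_eq)
      qed
      then show ?thesis using that le by linarith
    qed
    then show ?thesis
    proof cases
      case 1
      then have z: "card (S \<inter> T) choose 2 = 0" by (simp add: binomial_eq_0)
      have e: "b ^ (card (S \<inter> T) choose 2) = 1" unfolding z by simp
      have "0 \<le> (if T = S then b ^ (a choose 2) else 0)" using bp by simp
      then show ?thesis using h0 unfolding e by linarith
    next
      case 2
      then show ?thesis using h0 Sp by simp
    next
      case 3
      then show ?thesis by (simp add: h_def)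
    qed
  qed
  have "(\<Sum>T\<in>subsA n a. b ^ (card (S \<inter> T) choose 2))
      \<le> (\<Sum>T\<in>subsA n a. 1 + (if T = S then b ^ (a choose 2) else 0) + h T)"
    by (intro sum_mono pt)
  also have "\<dots> = real (card (subsA n a)) + b ^ (a choose 2) + (\<Sum>T\<in>subsA n a. h T)"
    using S by (simp add: sum.distrib)
  also have "(\<Sum>T\<in>subsA n a. h T) = (\<Sum>T\<in>subsA n a. \<Sum>i\<in>{2..<a}. if card (S \<inter> T) = i then b ^ (i choose 2) else 0)"
    by (intro sum.cong refl) (simp add: h_def)
  also have "\<dots> = (\<Sum>i\<in>{2..<a}. real (card {T\<in>subsA n a. card (S \<inter> T) = i}) * b ^ (i choose 2))"
    by (subst sum.swap) (simp add: sum.inter_filter[symmetric])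
  also have "\<dots> \<le> (\<Sum>i\<in>{2..<a}. real (a choose i) * real ((n - a) choose (a - i)) * b ^ (i choose 2))"
  proof (intro sum_mono mult_right_mono)
    fix i
    show "real (card {T\<in>subsA n a. card (S \<inter> T) = i}) \<le> real (a choose i) * real ((n - a) choose (a - i))"
      using card_overlap[OF Sp(1,2), of i] by (simp flip: of_nat_mult)
  qed (use b1 in simp)
  finally show ?thesis by (simp add: b_def)
qed

lemma EY2_bound:
  assumes p: "0 < p" "p < 1" and a: "a \<le> n"
  shows "EY2 n a p - 1 \<le> (1 + (\<Sum>i\<in>{2..<a}. sterm n a p i)) / mu n a p"
proof -
  define N where "N = real (card (subsA n a))"
  have N: "N = real (n choose a)" by (simp add: N_def card_subsA)
  have N0: "N > 0" using a by (simp add: N binomial_eq_0_iff)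
  define c where "c = (1-p) ^ (a choose 2)"
  have c0: "c > 0" using p by (simp add: c_def)
  define \<Sigma> where "\<Sigma> = (\<Sum>i\<in>{2..<a}. real (a choose i) * real ((n - a) choose (a - i)) * (1/(1-p)) ^ (i choose 2))"
  have ib: "\<forall>S\<in>subsA n a. (\<Sum>T\<in>subsA n a. (1/(1-p)) ^ (card (S \<inter> T) choose 2)) \<le> N + (1/(1-p)) ^ (a choose 2) + \<Sigma>"
    using inner_bound[OF p] unfolding N_def \<Sigma>_def by blast
  have "EY2 n a p \<le> (\<Sum>S\<in>subsA n a. N + (1/(1-p)) ^ (a choose 2) + \<Sigma>) / N^2"
    unfolding EY2_def N_def[symmetric]
    by (intro divide_right_mono sum_mono) (use ib in auto)
  also have "\<dots> = (N + 1/c + \<Sigma>) / N"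
    using N0 by (simp add: N_def[symmetric] power2_eq_square c_def power_one_over)
  also have "\<dots> = 1 + (1 + c * \<Sigma>) / (N * c)"
    using N0 c0 by (simp add: field_simps)
  also have "c * \<Sigma> = (\<Sum>i\<in>{2..<a}. sterm n a p i)"
    unfolding \<Sigma>_def sterm_def c_def by (simp add: sum_distrib_left mult_ac)
  also have "N * c = mu n a p" by (simp add: N mu_def c_def)
  finally show ?thesis by simp
qed



lemma choose2_real: "real (k choose 2) = real k * (real k - 1) / 2"
  by (induction k) (auto simp: numeral_2_eq_2 field_simps)

lemma binom_step: "(n choose Suc j) * Suc j = (n choose j) * (n - j)"
  using binomial_absorb_comp[of n j] binomial_absorption[of j n] by (simp add: mult.commute)

lemma binom_ratio:
  assumes "k \<le> a" "a \<le> n"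
  shows "(n choose (a - k)) * (n - a) ^ k \<le> (n choose a) * a ^ k"
  using assms(1)
proof (induction k)
  case 0 then show ?case by simp
next
  case (Suc k)
  define j where "j = a - Suc k"
  have aj: "a - k = Suc j" using Suc.prems by (simp add: j_def)
  have ja: "j \<le> a" "Suc j \<le> a" using Suc.prems by (auto simp: j_def)
  have "(n choose (a - Suc k)) * (n - a) ^ Suc k = ((n choose j) * (n - a)) * (n - a) ^ k"
    by (simp add: j_def mult_ac)
  also have "\<dots> \<le> ((n choose j) * (n - j)) * (n - a) ^ k"
    using ja by (intro mult_right_mono mult_left_mono) auto
  also have "\<dots> = ((n choose Suc j) * Suc j) * (n - a) ^ k" by (simp only: binom_step)
  also have "\<dots> \<le> ((n choose Suc j) * a) * (n - a) ^ k"
    using ja by (intro mult_right_mono mult_left_mono) auto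
  also have "\<dots> = a * ((n choose (a - k)) * (n - a) ^ k)" by (simp add: aj mult_ac)
  also have "\<dots> \<le> a * ((n choose a) * a ^ k)"
    using Suc by (intro mult_left_mono) auto
  also have "\<dots> = (n choose a) * a ^ Suc k" by (simp add: mult_ac)
  finally show ?case .
qed

lemma sterm_boundA:
  assumes p: "0 < p" "p < 1" and b: "b = 1/(1-p)" and i: "i \<le> a" and an: "a < n"
  shows "sterm n a p i \<le> mu n a p * (real a ^ 2 * b powr ((real i - 1)/2) / real (n - a)) ^ i"
proof -
  have b0: "b > 0" using p b by simp
  define c where "c = (1-p) ^ (a choose 2)"
  have c0: "c > 0" using p by (simp add: c_def)
  have nma: "real (n - a) > 0" using an by simp
  have h1: "real (a choose i) \<le> real a ^ i"
    using binomial_le_pow[OF i] by (metis of_nat_le_iff of_nat_power)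
  have "real ((n - a) choose (a - i)) * real (n - a) ^ i \<le> real (n choose (a - i)) * real (n - a) ^ i"
    by (intro mult_right_mono) (auto simp: binomial_right_mono)
  also have "\<dots> \<le> real (n choose a) * real a ^ i"
    using binom_ratio[OF i less_imp_le[OF an]] by (metis of_nat_le_iff of_nat_mult of_nat_power)
  finally have h2: "real ((n - a) choose (a - i)) \<le> real (n choose a) * real a ^ i / real (n - a) ^ i"
    using nma by (simp add: field_simps)
  have h3: "(1/(1-p)) ^ (i choose 2) = (b powr ((real i - 1)/2)) ^ i"
  proof -
    have "(1/(1-p)) ^ (i choose 2) = b powr real (i choose 2)" using b0 b by (simp add: powr_realpow)
    also have "\<dots> = (b powr ((real i - 1)/2)) ^ i"
      using b0 by (simp add: powr_power choose2_real mult_ac)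
    finally show ?thesis .
  qed
  have "sterm n a p i = real (a choose i) * real ((n - a) choose (a - i)) * c * (b powr ((real i - 1)/2)) ^ i"
    by (simp add: sterm_def c_def h3)
  also have "\<dots> \<le> real a ^ i * (real (n choose a) * real a ^ i / real (n - a) ^ i) * c * (b powr ((real i - 1)/2)) ^ i"
    using c0 h1 h2 by (intro mult_right_mono mult_mono) auto
  also have "\<dots> = mu n a p * (real a ^ 2 * b powr ((real i - 1)/2) / real (n - a)) ^ i"
  proof -
    have aa: "(real a ^ 2) ^ i = real a ^ i * real a ^ i" by (simp add: power2_eq_square power_mult_distrib)
    show ?thesis using nma by (simp add: mu_def c_def power_mult_distrib power_divide aa field_simps)
  qed
  finally show ?thesis .
qed

lemma sterm_boundB:
  assumes p: "0 < p" "p < 1" and b: "b = 1/(1-p)" and i: "i \<le> a" and an: "a \<le> n"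
  shows "sterm n a p i \<le> (real a * real n * b powr (- (real a + real i - 1) / 2)) ^ (a - i)"
proof -
  have b0: "b > 0" using p b by simp
  have h1: "real (a choose i) \<le> real a ^ (a - i)"
  proof -
    have "a choose i = a choose (a - i)" using i by (rule binomial_symmetric)
    also have "\<dots> \<le> a ^ (a - i)" by (rule binomial_le_pow) simp
    finally show ?thesis by (metis of_nat_le_iff of_nat_power)
  qed
  have h2: "real ((n - a) choose (a - i)) \<le> real n ^ (a - i)"
  proof (cases "a - i \<le> n - a")
    case True
    then have "(n - a) choose (a - i) \<le> (n - a) ^ (a - i)" by (rule binomial_le_pow)
    also have "\<dots> \<le> n ^ (a - i)" by (intro power_mono) auto
    finally show ?thesis by (metis of_nat_le_iff of_nat_power)
  qed (simp add: binomial_eq_0)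
  have h3: "(1-p) ^ (a choose 2) * (1/(1-p)) ^ (i choose 2) = (b powr (- (real a + real i - 1) / 2)) ^ (a - i)"
  proof -
    have "1 - p = 1 / b" using b p by simp
    then have "(1-p) ^ (a choose 2) * (1/(1-p)) ^ (i choose 2) = b powr (real (i choose 2) - real (a choose 2))"
      using b0 by (simp add: powr_diff powr_realpow power_one_over)
    also have "real (i choose 2) - real (a choose 2) = real (a - i) * (- (real a + real i - 1) / 2)"
      using i by (simp add: choose2_real of_nat_diff field_simps)
    also have "b powr \<dots> = (b powr (- (real a + real i - 1) / 2)) ^ (a - i)"
      using b0 by (simp add: powr_power)
    finally show ?thesis .
  qed
  have "sterm n a p i = (real (a choose i) * real ((n - a) choose (a - i))) * ((1-p) ^ (a choose 2) * (1/(1-p)) ^ (i choose 2))"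
    by (simp add: sterm_def mult.assoc)
  also have "\<dots> = real (a choose i) * real ((n - a) choose (a - i)) * (b powr (- (real a + real i - 1) / 2)) ^ (a - i)"
    by (simp only: h3)
  also have "\<dots> \<le> real a ^ (a - i) * real n ^ (a - i) * (b powr (- (real a + real i - 1) / 2)) ^ (a - i)"
    using h1 h2 by (intro mult_right_mono mult_mono) auto
  also have "\<dots> = (real a * real n * b powr (- (real a + real i - 1) / 2)) ^ (a - i)"
    by (simp add: power_mult_distrib)
  finally show ?thesis .
qed



lemma ln_le_powr:
  fixes x e :: real
  assumes x: "x \<ge> 1" and e: "e > 0"
  shows "ln x \<le> x powr e / e"
proof -
  have "e * ln x = ln (x powr e)" using x by (subst ln_powr) auto
  also have "\<dots> \<le> x powr e - 1" using x by (intro ln_le_minus_one) simp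
  finally show ?thesis using e by (simp add: field_simps)
qed

lemma lnpow_lim:
  fixes d :: real
  assumes d: "d > 0"
  shows "(\<lambda>n::nat. ln (real n) ^ k * real n powr (-d)) \<longlonglongrightarrow> 0"
proof (rule Lim_null_comparison)
  define e where "e = d / (2 * (real k + 1))"
  have e0: "e > 0" using d by (simp add: e_def)
  have ke: "real k * e - d \<le> - d / 2"
  proof -
    have "real k * e = d * (real k / (2 * (real k + 1)))" by (simp add: e_def)
    also have "\<dots> \<le> d * (1/2)" using d by (intro mult_left_mono) (auto simp: field_simps)
    finally show ?thesis by simp
  qed
  show "\<forall>\<^sub>F n in sequentially. norm (ln (real n) ^ k * real n powr (-d)) \<le> (1 / e ^ k) * real n powr (- d / 2)"
    using eventually_ge_at_top[of "1::nat"]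
  proof eventually_elim
    case (elim n)
    then have x: "real n \<ge> 1" by simp
    have l0: "0 \<le> ln (real n)" using x by simp
    have "ln (real n) ^ k \<le> (real n powr e / e) ^ k"
      using l0 ln_le_powr[OF x e0] by (intro power_mono) auto
    also have "\<dots> = real n powr (real k * e) / e ^ k"
      using x by (simp add: power_divide powr_power mult.commute)
    finally have h: "ln (real n) ^ k * real n powr (-d) \<le> real n powr (real k * e) / e ^ k * real n powr (-d)"
      by (intro mult_right_mono) auto
    also have "\<dots> = real n powr (real k * e - d) / e ^ k"
      using x by (simp add: powr_diff powr_minus field_simps)
    also have "\<dots> \<le> real n powr (- d / 2) / e ^ k"
      using x ke e0 by (intro divide_right_mono powr_mono) auto
    finally show ?case using l0 by (simp add: abs_mult)
  qed
  show "(\<lambda>n. (1 / e ^ k) * real n powr (- d / 2)) \<longlonglongrightarrow> 0"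
    by (intro tendsto_mult_right_zero tendsto_mult_left_zero tendsto_neg_powr filterlim_real_sequentially) (use d in simp)
qed

lemma bpow_L:
  fixes b x c :: real
  assumes "b > 1" "x > 0"
  shows "b powr (c * log b x) = x powr c"
proof -
  have "x powr c = (b powr log b x) powr c" using assms by simp
  also have "\<dots> = b powr (c * log b x)" by (simp add: powr_powr mult.commute)
  finally show ?thesis by simp
qed

lemma sum_sterm_bound:
  fixes p b A :: real and n a :: nat
  assumes p: "0 < p" "p < 1" and b: "b = 1/(1-p)"
    and n1: "1 \<le> n" and an: "real a \<le> real n / 2"
    and alow: "1.01 * log b (real n) \<le> real a" and aup: "real a \<le> A"
    and L10: "10 \<le> log b (real n)"
    and mub: "mu n a p \<le> real n powr 1.99"
    and X1: "2 * A^2 * b^25 / real n \<le> 1"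
    and X2: "2 * A^2 * real n powr (-0.05) \<le> 1"
    and X3: "A * real n powr (-0.4) \<le> 1"
  shows "(\<Sum>i\<in>{2..<a}. sterm n a p i) \<le> A * (real n powr 1.99 * (2 * A^2 * b^25 / real n)^2
      + real n powr 1.99 * (2 * A^2 * real n powr (-0.05))^50 + A * real n powr (-0.4))"
proof -
  define L where "L = log b (real n)"
  define T where "T = real n powr 1.99 * (2 * A^2 * b^25 / real n)^2
      + real n powr 1.99 * (2 * A^2 * real n powr (-0.05))^50 + A * real n powr (-0.4)"
  have b1: "b > 1" unfolding b using p by (simp add: less_divide_eq)
  have x0: "real n > 0" using n1 by simp
  have an': "a < n" using an n1 by linarith
  have nma: "real (n - a) \<ge> real n / 2" using an an' by (simp add: of_nat_diff)
  have A0: "A \<ge> 0" using aup by linarith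
  have mu0: "mu n a p \<ge> 0" using p by (simp add: mu_def)
  have T0: "T \<ge> 0" unfolding T_def using A0 x0 b1 by (intro add_nonneg_nonneg mult_nonneg_nonneg) auto
  have al: "101 * L \<le> 100 * real a" using alow unfolding L_def by simp
  have each: "sterm n a p i \<le> T" if i: "i \<in> {2..<a}" for i
  proof (cases "real i \<ge> 1.9 * L")
    case True
    define y where "y = real a * real n * b powr (- (real a + real i - 1) / 2)"
    have st: "sterm n a p i \<le> y ^ (a - i)" unfolding y_def
      using i an' by (intro sterm_boundB[OF p b]) auto
    have y0: "0 \<le> y" unfolding y_def by simp
    have Ti: "19 * L \<le> 10 * real i" using True by simp
    have "- (real a + real i - 1) / 2 \<le> - 1.4 * L" using Ti al L10 unfolding L_def by simp
    then have "b powr (- (real a + real i - 1) / 2) \<le> b powr (- 1.4 * L)"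
      using b1 by (intro powr_mono) auto
    also have "\<dots> = real n powr (- 1.4)" unfolding L_def using b1 x0 by (rule bpow_L)
    finally have yle: "y \<le> real a * real n * real n powr (- 1.4)" unfolding y_def
      by (intro mult_left_mono) auto
    have eq: "real n * real n powr (- 1.4) = real n powr (- 0.4)"
    proof -
      have "real n powr (- 0.4) = real n powr (1 + (- 1.4))" by simp
      also have "\<dots> = real n powr 1 * real n powr (- 1.4)" by (rule powr_add)
      also have "\<dots> = real n * real n powr (- 1.4)" using x0 by simp
      finally show ?thesis by simp
    qed
    have "y \<le> real a * real n powr (- 0.4)" using yle eq by (metis mult.assoc)
    also have "\<dots> \<le> A * real n powr (- 0.4)" using aup by (intro mult_right_mono) auto
    finally have yX: "y \<le> A * real n powr (- 0.4)" .
    have "y ^ (a - i) \<le> y ^ 1" using i y0 yX X3 by (intro power_decreasing) auto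
    then have "sterm n a p i \<le> A * real n powr (- 0.4)" using st yX by simp
    moreover have "0 \<le> real n powr 1.99 * (2 * A^2 * b^25 / real n)^2" by simp
    moreover have "0 \<le> real n powr 1.99 * (2 * A^2 * real n powr (-0.05))^50" by simp
    ultimately show ?thesis unfolding T_def by linarith
  next
    case False
    define B where "B = b powr ((real i - 1) / 2)"
    define z where "z = real a ^ 2 * B / real (n - a)"
    have st: "sterm n a p i \<le> mu n a p * z ^ i" unfolding z_def B_def
      using i an' by (intro sterm_boundA[OF p b]) auto
    have z0: "0 \<le> z" unfolding z_def B_def by simp
    have a2: "real a ^ 2 \<le> A ^ 2" using aup by (intro power_mono) auto
    have zle: "z \<le> A ^ 2 * B / (real n / 2)" unfolding z_def
      using a2 nma x0 by (intro frac_le mult_right_mono) (auto simp: B_def)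
    show ?thesis
    proof (cases "i \<le> 50")
      case True
      have "(real i - 1) / 2 \<le> 25" using True by simp
      then have "B \<le> b powr 25" unfolding B_def using b1 by (intro powr_mono) auto
      also have "\<dots> = b ^ 25" using b1 by (simp add: powr_realpow)
      finally have "A ^ 2 * B / (real n / 2) \<le> A ^ 2 * b ^ 25 / (real n / 2)"
        using x0 by (intro divide_right_mono mult_left_mono) auto
      then have zX: "z \<le> 2 * A^2 * b^25 / real n" using zle by (simp add: field_simps)
      have "z ^ i \<le> z ^ 2" using i z0 zX X1 by (intro power_decreasing) auto
      also have "\<dots> \<le> (2 * A^2 * b^25 / real n) ^ 2" using z0 zX by (intro power_mono) auto
      finally have "mu n a p * z ^ i \<le> real n powr 1.99 * (2 * A^2 * b^25 / real n) ^ 2"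
        using mu0 mub z0 by (intro mult_mono) auto
      moreover have "0 \<le> real n powr 1.99 * (2 * A^2 * real n powr (-0.05))^50" by simp
      moreover have "0 \<le> A * real n powr (-0.4)" using A0 by simp
      ultimately show ?thesis using st unfolding T_def by linarith
    next
      case False2: False
      have Fi: "10 * real i < 19 * L" using False by simp
      have "(real i - 1) / 2 \<le> 0.95 * L" using Fi by simp
      then have "B \<le> b powr (0.95 * L)" unfolding B_def using b1 by (intro powr_mono) auto
      also have "\<dots> = real n powr 0.95" unfolding L_def using b1 x0 by (rule bpow_L)
      finally have "A ^ 2 * B / (real n / 2) \<le> A ^ 2 * real n powr 0.95 / (real n / 2)"
        using x0 by (intro divide_right_mono mult_left_mono) auto
      also have "\<dots> = 2 * A^2 * (real n powr 0.95 / real n)" by (simp add: field_simps)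
      also have "real n powr 0.95 / real n = real n powr (-0.05)"
      proof -
        have "real n powr (-0.05) = real n powr (0.95 - 1)" by simp
        also have "\<dots> = real n powr 0.95 / real n powr 1" by (rule powr_diff)
        also have "\<dots> = real n powr 0.95 / real n" using x0 by simp
        finally show ?thesis by simp
      qed
      finally have zX: "z \<le> 2 * A^2 * real n powr (-0.05)" using zle by simp
      have "z ^ i \<le> z ^ 50" using False2 z0 zX X2 by (intro power_decreasing) auto
      also have "\<dots> \<le> (2 * A^2 * real n powr (-0.05)) ^ 50" using z0 zX by (intro power_mono) auto
      finally have "mu n a p * z ^ i \<le> real n powr 1.99 * (2 * A^2 * real n powr (-0.05)) ^ 50"
        using mu0 mub z0 by (intro mult_mono) auto
      moreover have "0 \<le> real n powr 1.99 * (2 * A^2 * b^25 / real n)^2" by simp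
      moreover have "0 \<le> A * real n powr (-0.4)" using A0 by simp
      ultimately show ?thesis using st unfolding T_def by linarith
    qed
  qed
  have "(\<Sum>i\<in>{2..<a}. sterm n a p i) \<le> real (card {2..<a}) * T"
    by (rule sum_bounded_above) (use each in auto)
  also have "\<dots> \<le> A * T"
  proof -
    have "real (card {2..<a}) \<le> real a" by simp
    also have "\<dots> \<le> A" by (rule aup)
    finally show ?thesis using T0 by (intro mult_right_mono) auto
  qed
  finally show ?thesis unfolding T_def .
qed



lemma eta_eq:
  fixes x A c0 l b :: real
  assumes x: "x > 0" and A: "A = c0 * l"
  shows "A * (x powr 1.99 * (2 * A^2 * b^25 / x)^2 + x powr 1.99 * (2 * A^2 * x powr (-0.05))^50 + A * x powr (-0.4))
    = (4 * b^50 * c0^5) * (l^5 * x powr (-0.01)) + (2^50 * c0^101) * (l^101 * x powr (-0.51))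
      + c0^2 * (l^2 * x powr (-0.4))"
proof -
  have p1: "x powr 1.99 / x^2 = x powr (-0.01)"
  proof -
    have "x powr (-0.01) = x powr (1.99 - 2)" by simp
    also have "\<dots> = x powr 1.99 / x powr 2" by (rule powr_diff)
    also have "x powr 2 = x^2" using x by (simp add: powr_realpow)
    finally show ?thesis by simp
  qed
  have p2: "x powr 1.99 * (x powr (-0.05))^50 = x powr (-0.51)"
  proof -
    have "(x powr (-0.05))^50 = x powr (-2.5)" using x by (simp add: powr_power)
    moreover have "x powr (-0.51) = x powr (1.99 + (-2.5))" by simp
    moreover have "x powr (1.99 + (-2.5)) = x powr 1.99 * x powr (-2.5)" by (rule powr_add)
    ultimately show ?thesis by simp
  qed
  have t1: "A * (x powr 1.99 * (2 * A^2 * b^25 / x)^2) = (4 * b^50 * c0^5) * (l^5 * (x powr 1.99 / x^2))"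
  proof -
    have "(2 * A^2 * b^25 / x)^2 = (4 * A^4 * b^50) / x^2"
      by (simp add: power_divide power_mult_distrib flip: power_mult)
    then have "A * (x powr 1.99 * (2 * A^2 * b^25 / x)^2) = (4 * A^4 * b^50 * A) * (x powr 1.99 / x^2)"
      by (simp add: mult_ac)
    also have "4 * A^4 * b^50 * A = 4 * b^50 * c0^5 * l^5" unfolding A by algebra
    finally show ?thesis by (simp add: mult_ac)
  qed
  have t2: "A * (x powr 1.99 * (2 * A^2 * x powr (-0.05))^50) = (2^50 * c0^101) * (l^101 * (x powr 1.99 * (x powr (-0.05))^50))"
  proof -
    have "(2 * A^2 * x powr (-0.05))^50 = 2^50 * A^100 * (x powr (-0.05))^50"
      by (simp add: power_mult_distrib flip: power_mult)
    then have "A * (x powr 1.99 * (2 * A^2 * x powr (-0.05))^50) = (2^50 * A^100 * A) * (x powr 1.99 * (x powr (-0.05))^50)"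
      by (simp add: mult_ac)
    also have "2^50 * A^100 * A = 2^50 * c0^101 * l^101" unfolding A by algebra
    finally show ?thesis by (simp add: mult_ac)
  qed
  have t3: "A * (A * x powr (-0.4)) = c0^2 * (l^2 * x powr (-0.4))"
    unfolding A by (simp add: power2_eq_square field_simps)
  show ?thesis by (simp only: distrib_left t1 t2 t3 p1 p2)
qed

lemma lim_const_lnpow:
  fixes C d :: real
  assumes "d > 0"
  shows "(\<lambda>n::nat. C * (ln (real n) ^ k * real n powr (-d))) \<longlonglongrightarrow> 0"
  by (intro tendsto_mult_right_zero tendsto_mult_left_zero lnpow_lim assms)

theorem lemma20:
  fixes p :: real and a :: "nat \<Rightarrow> nat"
  assumes p: "0 < p" "p < 1"
  assumes a_bounds: "\<forall>\<^sub>F n in sequentially.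
      1.01 * log (1 / (1 - p)) (real n) \<le> real (a n) \<and>
      real (a n) \<le> 100 * log (1 / (1 - p)) (real n)"
  assumes mu_bound: "\<forall>\<^sub>F n in sequentially.
      real (n choose a n) * (1 - p) ^ (a n choose 2) \<le> real n powr 1.99"
  shows "\<exists>\<epsilon> :: nat \<Rightarrow> real. \<epsilon> \<longlonglongrightarrow> 0 \<and>
    (\<forall>\<^sub>F n in sequentially. \<exists>q. is_coupling q (gnp n p) (gnp (n - a n) p) \<and>
       measure_pmf.prob q
         {(G, H). chromatic_number n G \<le> chromatic_number (n - a n) H + 1}
       \<ge> 1 - (1 + \<epsilon> n) /
             (2 * sqrt (real (n choose a n) * (1 - p) ^ (a n choose 2))))"
proof -
  define b where "b = 1 / (1 - p)"
  have b1: "b > 1" unfolding b_def using p by (simp add: less_divide_eq)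
  define lb where "lb = ln b"
  have lb0: "lb > 0" using b1 by (simp add: lb_def)
  define c0 where "c0 = 100 / lb"
  define A where "A n = 100 * log b (real n)" for n :: nat
  have A_eq: "A n = c0 * ln (real n)" for n by (simp add: A_def c0_def lb_def log_def)
  define \<eta> where "\<eta> n = A n * (real n powr 1.99 * (2 * A n^2 * b^25 / real n)^2
      + real n powr 1.99 * (2 * A n^2 * real n powr (-0.05))^50 + A n * real n powr (-0.4))" for n
  define \<epsilon> where "\<epsilon> n = sqrt (1 + \<eta> n) - 1" for n
  have pos: "\<forall>\<^sub>F n in sequentially. real n > 0"
    using eventually_ge_at_top[of "1::nat"] by eventually_elim simp
  have pinv: "1 / x = x powr (-1)" if "x > 0" for x :: real
    using that by (simp add: powr_minus inverse_eq_divide)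
  have h\<eta>: "\<eta> \<longlonglongrightarrow> 0"
  proof -
    have "(\<lambda>n. (4 * b^50 * c0^5) * (ln (real n)^5 * real n powr (-0.01)) + (2^50 * c0^101) * (ln (real n)^101 * real n powr (-0.51))
      + c0^2 * (ln (real n)^2 * real n powr (-0.4))) \<longlonglongrightarrow> 0 + 0 + 0"
      by (intro tendsto_add lim_const_lnpow) auto
    moreover have "\<forall>\<^sub>F n in sequentially. (4 * b^50 * c0^5) * (ln (real n)^5 * real n powr (-0.01)) + (2^50 * c0^101) * (ln (real n)^101 * real n powr (-0.51))
      + c0^2 * (ln (real n)^2 * real n powr (-0.4)) = \<eta> n"
      using pos by eventually_elim (simp only: \<eta>_def, rule eta_eq[symmetric], auto simp: A_eq)
    ultimately have "\<eta> \<longlonglongrightarrow> 0 + 0 + 0" by (rule Lim_transform_eventually)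
    then show ?thesis by simp
  qed
  have hX1: "(\<lambda>n. 2 * A n^2 * b^25 / real n) \<longlonglongrightarrow> 0"
  proof -
    have "(\<lambda>n. (2 * c0^2 * b^25) * (ln (real n)^2 * real n powr (-1))) \<longlonglongrightarrow> 0"
      by (intro lim_const_lnpow) auto
    moreover have "\<forall>\<^sub>F n in sequentially. (2 * c0^2 * b^25) * (ln (real n)^2 * real n powr (-1)) = 2 * A n^2 * b^25 / real n"
      using pos by eventually_elim (simp add: A_eq pinv[symmetric] power_mult_distrib)
    ultimately show ?thesis by (rule Lim_transform_eventually)
  qed
  have hX2: "(\<lambda>n. 2 * A n^2 * real n powr (-0.05)) \<longlonglongrightarrow> 0"
  proof -
    have "(\<lambda>n. (2 * c0^2) * (ln (real n)^2 * real n powr (-0.05))) \<longlonglongrightarrow> 0"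
      by (intro lim_const_lnpow) auto
    moreover have "\<forall>\<^sub>F n in sequentially. (2 * c0^2) * (ln (real n)^2 * real n powr (-0.05)) = 2 * A n^2 * real n powr (-0.05)"
      by (simp add: A_eq power_mult_distrib)
    ultimately show ?thesis by (rule Lim_transform_eventually)
  qed
  have hX3: "(\<lambda>n. A n * real n powr (-0.4)) \<longlonglongrightarrow> 0"
  proof -
    have "(\<lambda>n. c0 * (ln (real n)^1 * real n powr (-0.4))) \<longlonglongrightarrow> 0"
      by (intro lim_const_lnpow) auto
    moreover have "\<forall>\<^sub>F n in sequentially. c0 * (ln (real n)^1 * real n powr (-0.4)) = A n * real n powr (-0.4)"
      by (simp add: A_eq)
    ultimately show ?thesis by (rule Lim_transform_eventually)
  qed
  have hA: "(\<lambda>n. A n / real n) \<longlonglongrightarrow> 0"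
  proof -
    have "(\<lambda>n. c0 * (ln (real n)^1 * real n powr (-1))) \<longlonglongrightarrow> 0"
      by (intro lim_const_lnpow) auto
    moreover have "\<forall>\<^sub>F n in sequentially. c0 * (ln (real n)^1 * real n powr (-1)) = A n / real n"
      using pos by eventually_elim (simp add: A_eq pinv[symmetric])
    ultimately show ?thesis by (rule Lim_transform_eventually)
  qed
  have hL: "\<forall>\<^sub>F n in sequentially. 10 \<le> log b (real n)"
  proof -
    have "filterlim (\<lambda>n. ln (real n)) at_top sequentially"
      by (rule filterlim_compose[OF ln_at_top filterlim_real_sequentially])
    then have "\<forall>\<^sub>F n in sequentially. 10 * lb \<le> ln (real n)"
      by (simp add: filterlim_at_top)
    then show ?thesis
      by eventually_elim (use lb0 in \<open>simp add: log_def lb_def[symmetric] field_simps\<close>)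
  qed
  have "\<epsilon> \<longlonglongrightarrow> sqrt (1 + 0) - 1"
    unfolding \<epsilon>_def by (intro tendsto_diff tendsto_real_sqrt tendsto_add h\<eta> tendsto_const)
  then have h\<epsilon>: "\<epsilon> \<longlonglongrightarrow> 0" by simp
  have e1: "\<forall>\<^sub>F n in sequentially. 2 * A n^2 * b^25 / real n < 1" by (rule order_tendstoD(2)[OF hX1]) simp
  have e2: "\<forall>\<^sub>F n in sequentially. 2 * A n^2 * real n powr (-0.05) < 1" by (rule order_tendstoD(2)[OF hX2]) simp
  have e3: "\<forall>\<^sub>F n in sequentially. A n * real n powr (-0.4) < 1" by (rule order_tendstoD(2)[OF hX3]) simp
  have e4: "\<forall>\<^sub>F n in sequentially. A n / real n < 1/2" by (rule order_tendstoD(2)[OF hA]) simp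
  have ev: "\<forall>\<^sub>F n in sequentially. \<exists>q. is_coupling q (gnp n p) (gnp (n - a n) p) \<and>
       measure_pmf.prob q
         {(G, H). chromatic_number n G \<le> chromatic_number (n - a n) H + 1}
       \<ge> 1 - (1 + \<epsilon> n) /
             (2 * sqrt (real (n choose a n) * (1 - p) ^ (a n choose 2)))"
    using a_bounds mu_bound hL eventually_ge_at_top[of "1::nat"]
      e1 e2 e3 e4
  proof eventually_elim
    case (elim n)
    have n1: "1 \<le> n" using elim by simp
    have x0: "real n > 0" using n1 by simp
    have ab: "1.01 * log b (real n) \<le> real (a n)" "real (a n) \<le> A n"
      using elim(1) by (auto simp: A_def b_def)
    have An: "A n < real n / 2" using elim(8) x0 by (simp add: field_simps)
    have an2: "real (a n) \<le> real n / 2" using ab An by linarith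
    have an: "a n \<le> n" using an2 x0 by linarith
    have mub: "mu n (a n) p \<le> real n powr 1.99" using elim(2) by (simp add: mu_def)
    have mu0: "mu n (a n) p > 0" using an p by (simp add: mu_def binomial_eq_0_iff)
    have \<Sigma>: "(\<Sum>i\<in>{2..<a n}. sterm n (a n) p i) \<le> \<eta> n"
      unfolding \<eta>_def
      by (rule sum_sterm_bound[OF p b_def n1 an2 ab(1) ab(2) elim(3) mub]) (use elim in auto)
    obtain q where q: "is_coupling q (gnp n p) (gnp (n - a n) p)"
      "measure_pmf.prob q {(G, H). chromatic_number n G \<le> chromatic_number (n - a n) H + 1}
        \<ge> 1 - sqrt (EY2 n (a n) p - 1) / 2"
      using fixed_coupling[OF p an] by blast
    have "EY2 n (a n) p - 1 \<le> (1 + (\<Sum>i\<in>{2..<a n}. sterm n (a n) p i)) / mu n (a n) p"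
      by (rule EY2_bound[OF p an])
    also have "\<dots> \<le> (1 + \<eta> n) / mu n (a n) p"
      using \<Sigma> mu0 by (intro divide_right_mono) auto
    finally have "sqrt (EY2 n (a n) p - 1) \<le> sqrt ((1 + \<eta> n) / mu n (a n) p)" by simp
    also have "\<dots> = (1 + \<epsilon> n) / sqrt (mu n (a n) p)"
      by (simp add: \<epsilon>_def real_sqrt_divide)
    finally have s: "sqrt (EY2 n (a n) p - 1) \<le> (1 + \<epsilon> n) / sqrt (mu n (a n) p)" .
    have "(1 + \<epsilon> n) / (2 * sqrt (mu n (a n) p)) = ((1 + \<epsilon> n) / sqrt (mu n (a n) p)) / 2" by simp
    then have "1 - (1 + \<epsilon> n) / (2 * sqrt (mu n (a n) p)) \<le> 1 - sqrt (EY2 n (a n) p - 1) / 2"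
      using s by linarith
    then show ?case using q unfolding mu_def by (meson order_trans)
  qed
  show ?thesis using h\<epsilon> ev by blast
qed


end
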